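(* For every finite alphabet $\Sigma$ with $|\Sigma|\ge1$, the minimum deterministic finite automaton over $\Sigma$ recognizing $L_{\mathrm{UNIQ}}$ has at least $2^{|\Sigma|-1}$ states.
   Context: Let $\Sigma$ be a finite alphabet and $\$\notin\Sigma$ a delimiter symbol; $\Sigma_\$=\Sigma\cup\{\$\}$. The bigram map $\Phi$ sends a string $z\in\$\Sigma^*\$$ to the vector $\Phi(z)\in\mathbb{N}^{\Sigma_\$^2}$ whose $(i,j)$ entry is the number of positions at which the two-letter string $ij$ occurs as a contiguous factor of $z$ (counting overlaps). $L_{\mathrm{UNIQ}}\subseteq\Sigma^*$ is the set of $w\in\Sigma^*$ such that the only $z\in\$\Sigma^*\$$ with $\Phi(z)=\Phi(\$w\$)$ is $z=\$w\$$ (this language is regular). *)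

theory Defs
  imports Main
begin

text \<open>Alphabet: the finite type 'a (Sigma = UNIV). The extended alphabet
  Sigma_$ is 'a option, with None playing the role of the delimiter $.\<close>

definition delim :: "'a list \<Rightarrow> 'a option list" where
  "delim w = None # map Some w @ [None]"

definition bigram :: "'b list \<Rightarrow> 'b \<Rightarrow> 'b \<Rightarrow> nat" where
  "bigram z i j = card {k. Suc k < length z \<and> z ! k = i \<and> z ! Suc k = j}"

definition L_UNIQ :: "'a list set" where
  "L_UNIQ = {w. \<forall>v. bigram (delim v) = bigram (delim w) \<longrightarrow> v = w}"

definition dfa :: "'s set \<Rightarrow> ('s \<Rightarrow> 'a \<Rightarrow> 's) \<Rightarrow> 's \<Rightarrow> 's set \<Rightarrow> bool" where
  "dfa Q \<delta> q0 F \<longleftrightarrow> finite Q \<and> q0 \<in> Q \<and> F \<subseteq> Q \<and> (\<forall>q\<in>Q. \<forall>a. \<delta> q a \<in> Q)"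

definition dfa_lang :: "('s \<Rightarrow> 'a \<Rightarrow> 's) \<Rightarrow> 's \<Rightarrow> 's set \<Rightarrow> 'a list set" where
  "dfa_lang \<delta> q0 F = {w. fold (\<lambda>a q. \<delta> q a) w q0 \<in> F}"

end

theory Submission
  imports Defs "HOL-Library.Multiset"
begin

fun pr :: "'b list \<Rightarrow> ('b \<times> 'b) multiset" where
  "pr (x#y#r) = add_mset (x,y) (pr (y#r))"
| "pr _ = {#}"

definition B :: "'b list \<Rightarrow> 'b \<Rightarrow> 'b \<Rightarrow> nat set" where
  "B z i j = {k. Suc k < length z \<and> z ! k = i \<and> z ! Suc k = j}"

lemma B_fin: "finite (B z i j)"
  by (rule finite_subset[of _ "{..<length z}"]) (auto simp: B_def)

lemma B_cons: "B (x#y#r) i j = (if x = i \<and> y = j then {0} else {}) \<union> Suc ` B (y#r) i j"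
proof (rule set_eqI)
  fix k show "k \<in> B (x#y#r) i j \<longleftrightarrow> k \<in> (if x = i \<and> y = j then {0} else {}) \<union> Suc ` B (y#r) i j"
    by (cases k) (auto simp: B_def)
qed

lemma bigram_pr: "bigram z i j = count (pr z) (i,j)"
proof (induction z rule: pr.induct)
  case (1 x y r)
  have "bigram (x#y#r) i j = card (B (x#y#r) i j)" by (simp add: bigram_def B_def)
  also have "\<dots> = (if x = i \<and> y = j then 1 else 0) + card (B (y#r) i j)"
    unfolding B_cons
    by (subst card_Un_disjoint) (auto simp: B_fin card_image)
  also have "card (B (y#r) i j) = bigram (y#r) i j" by (simp add: bigram_def B_def)
  finally show ?case using 1 by auto
next
  case ("2_1")
  then show ?case by (simp add: bigram_def)
next
  case ("2_2" v)
  then show ?case by (simp add: bigram_def)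
qed

lemma pr_append: "pr (xs @ c # ys) = pr (xs @ [c]) + pr (c # ys)"
  by (induction xs rule: pr.induct) auto

lemma size_pr: "size (pr z) = length z - 1"
  by (induction z rule: pr.induct) auto

lemma pr_e: "pr (c # ys @ c # zs) = pr (c # ys @ [c]) + pr (c # zs)"
  using pr_append[of "c#ys" c zs] by (simp only: append_Cons)

lemma pr_swap: "pr (xs @ c # ys @ c # zs @ c # ws) = pr (xs @ c # zs @ c # ys @ c # ws)"
proof -
  have "pr (xs @ c # ys @ c # zs @ c # ws) = pr (xs @ [c]) + (pr (c # ys @ [c]) + (pr (c # zs @ [c]) + pr (c # ws)))"
    by (simp only: pr_append[of xs c "ys @ c # zs @ c # ws"] pr_e[of c ys "zs @ c # ws"] pr_e[of c zs ws])
  moreover have "pr (xs @ c # zs @ c # ys @ c # ws) = pr (xs @ [c]) + (pr (c # zs @ [c]) + (pr (c # ys @ [c]) + pr (c # ws)))"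
    by (simp only: pr_append[of xs c "zs @ c # ys @ c # ws"] pr_e[of c zs "ys @ c # ws"] pr_e[of c ys ws])
  ultimately show ?thesis by (metis add.left_commute)
qed

lemma bigram_eq_len:
  assumes "bigram z = bigram z'" "length z \<ge> 1" "length z' \<ge> 1"
  shows "length z = length z'"
proof -
  have "pr z = pr z'" using assms(1) by (intro multiset_eqI) (metis bigram_pr prod.collapse)
  hence "length z - 1 = length z' - 1" by (metis size_pr)
  thus ?thesis using assms by linarith
qed

lemma bigram_pos: "Suc k < length z \<Longrightarrow> bigram z (z!k) (z!Suc k) > 0"
  unfolding bigram_def using B_fin[of z "z!k" "z!Suc k"]
  by (subst card_gt_0_iff) (auto simp: B_def)

lemma bigram_posD: "bigram z a b > 0 \<Longrightarrow> \<exists>k. Suc k < length z \<and> z!k = a \<and> z!Suc k = b"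
  unfolding bigram_def by (metis (mono_tags, lifting) card.empty empty_Collect_eq less_irrefl)

lemma det:
  assumes eq: "bigram z = bigram z'" and len: "length z = length z'" and "length z' \<ge> 2"
    and z0: "z!0 = z'!0" and zl: "z!(length z - 1) = z'!(length z' - 1)"
    and nn: "\<forall>i. 0 < i \<longrightarrow> Suc i < length z \<longrightarrow> z!i \<noteq> None"
    and P: "\<forall>i k. Suc (Suc i) < length z' \<longrightarrow> Suc k < length z' \<longrightarrow> z'!k = z'!i \<longrightarrow> z'!Suc k \<noteq> None \<longrightarrow> z'!Suc k = z'!Suc i"
  shows "z = z'"
proof -
  have step: "z!Suc i = z'!Suc i" if a: "Suc i < length z" and IH: "z!i = z'!i" for i
  proof (cases "Suc (Suc i) < length z")
    case False
    hence l: "Suc i = length z - 1" "Suc i = length z' - 1" using a len by linarith+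
    show ?thesis using zl l by metis
  next
    case True
    note b = True
    have nN: "z!Suc i \<noteq> None" using nn b by blast
    have "bigram z (z!i) (z!Suc i) > 0" using bigram_pos a by blast
    hence "bigram z' (z'!i) (z!Suc i) > 0" using eq IH by metis
    from bigram_posD[OF this] obtain k where k: "Suc k < length z'" "z'!k = z'!i" "z'!Suc k = z!Suc i"
      by blast
    have b': "Suc (Suc i) < length z'" using b len by linarith
    have "z'!Suc k = z'!Suc i" using P b' k(1,2) k(3) nN by metis
    thus ?thesis using k(3) by metis
  qed
  have all: "\<forall>i<length z. z!i = z'!i"
  proof (intro allI)
    fix i show "i < length z \<longrightarrow> z!i = z'!i"
    proof (induction i)
      case 0 show ?case using z0 by blast
    next
      case (Suc i) show ?case using Suc step by (meson Suc_lessD)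
    qed
  qed
  show ?thesis by (rule nth_equalityI[OF len]) (use all in blast)
qed

lemma delim_len: "length (delim v) = length v + 2"
  by (simp add: delim_def)

lemma delim_nth: "i < length (delim v) \<Longrightarrow>
  delim v ! i = (if i = 0 \<or> i = Suc (length v) then None else Some (v!(i-1)))"
  by (auto simp: delim_def nth_append nth_Cons split: nat.splits)

lemma uniq_word:
  assumes "distinct u" "c \<notin> set u" "d \<notin> set u" "c \<noteq> d"
  shows "u @ [c,d,c] \<in> L_UNIQ"
proof -
  define w where "w = u @ [c,d,c]"
  have dw: "distinct (u @ [c,d])" using assms by auto
  have wi: "\<And>a. a < Suc (Suc (length u)) \<Longrightarrow> w!a = (u @ [c,d])!a"
    unfolding w_def apply (auto simp: nth_append)
    apply (subgoal_tac "a - length u = 0 \<or> a - length u = 1")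
     apply auto
    done
  have wd: "\<And>a b. a < Suc (Suc (length u)) \<Longrightarrow> b < Suc (Suc (length u)) \<Longrightarrow> w!a = w!b \<Longrightarrow> a = b"
  proof -
    fix a b assume "a < Suc (Suc (length u))" "b < Suc (Suc (length u))" "w!a = w!b"
    moreover have "length (u @ [c,d]) = Suc (Suc (length u))" by simp
    ultimately show "a = b" using wi nth_eq_iff_index_eq[OF dw] by metis
  qed
  have lw: "length w = length u + 3" by (simp add: w_def)
  have P: "\<forall>i k. Suc (Suc i) < length (delim w) \<longrightarrow> Suc k < length (delim w) \<longrightarrow> delim w!k = delim w!i \<longrightarrow> delim w!Suc k \<noteq> None \<longrightarrow> delim w!Suc k = delim w!Suc i"
  proof (intro allI impI)
    fix i k
    assume h: "Suc (Suc i) < length (delim w)" "Suc k < length (delim w)" "delim w!k = delim w!i" "delim w!Suc k \<noteq> None"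
    have "k = i"
    proof (cases "i = 0")
      case True
      then show ?thesis using h delim_nth[of k w] delim_nth[of i w] lw by (auto simp: delim_len split: if_splits)
    next
      case False
      have k1: "k \<noteq> 0" "Suc k \<noteq> Suc (length w)" using h delim_nth[of k w] delim_nth[of i w] delim_nth[of "Suc k" w] lw False by (auto simp: delim_len split: if_splits)
      have "w!(k-1) = w!(i-1)" using h delim_nth[of k w] delim_nth[of i w] lw False k1 by (auto simp: delim_len split: if_splits)
      moreover have "k - 1 < Suc (Suc (length u))" "i - 1 < Suc (Suc (length u))"
        using h k1 lw False by (auto simp: delim_len)
      ultimately have "k - 1 = i - 1" using wd by blast
      then show ?thesis using False k1 by simp
    qed
    then show "delim w!Suc k = delim w!Suc i" by simp
  qed
  show ?thesis unfolding L_UNIQ_def w_def[symmetric]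
  proof (intro CollectI allI impI)
    fix v assume e: "bigram (delim v) = bigram (delim w)"
    have len: "length (delim v) = length (delim w)"
      by (rule bigram_eq_len[OF e]) (auto simp: delim_len)
    have "delim v = delim w"
    proof (rule det[OF e len])
      show "2 \<le> length (delim w)" by (simp add: delim_len)
      show "delim v ! 0 = delim w ! 0" by (simp add: delim_def)
      show "delim v ! (length (delim v) - 1) = delim w ! (length (delim w) - 1)"
        by (simp add: delim_def nth_append)
      show "\<forall>i. 0 < i \<longrightarrow> Suc i < length (delim v) \<longrightarrow> delim v ! i \<noteq> None"
        using delim_nth[of _ v] by (auto simp: delim_len)
    qed (rule P)
    thus "v = w" by (simp add: delim_def)
  qed
qed

lemma nonuniq_word:
  assumes "distinct u" "c \<in> set u" "d \<notin> set u" "c \<noteq> d"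
  shows "u @ [c,d,c] \<notin> L_UNIQ"
proof -
  obtain p q where u: "u = p @ c # q" using split_list assms(2) by metis
  have dq: "d \<notin> set q" using assms u by auto
  define v where "v = p @ c # d # c # q @ [c]"
  have ne: "v \<noteq> u @ [c,d,c]"
  proof (cases q)
    case Nil then show ?thesis using assms u by (simp add: v_def)
  next
    case (Cons x q') then show ?thesis using dq u by (simp add: v_def)
  qed
  have "pr (delim (u @ [c,d,c])) = pr (delim v)"
  proof -
    have "delim (u @ [c,d,c]) = (None # map Some p) @ Some c # map Some q @ Some c # [Some d] @ Some c # [None]"
      by (simp add: delim_def u)
    moreover have "delim v = (None # map Some p) @ Some c # [Some d] @ Some c # map Some q @ Some c # [None]"
      by (simp add: delim_def v_def)
    ultimately show ?thesis by (simp only: pr_swap)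
  qed
  hence "bigram (delim v) = bigram (delim (u @ [c,d,c]))"
    by (intro ext) (simp add: bigram_pr)
  thus ?thesis using ne unfolding L_UNIQ_def by blast
qed

lemma fold_in:
  assumes "dfa Q \<delta> q0 F" "q \<in> Q"
  shows "fold (\<lambda>a q. \<delta> q a) w q \<in> Q"
  using assms(2) by (induction w arbitrary: q) (use assms(1) in \<open>auto simp: dfa_def\<close>)

theorem theorem3:
  fixes Q :: "'s set" and \<delta> :: "'s \<Rightarrow> 'a::finite \<Rightarrow> 's" and q0 :: 's and F :: "'s set"
  assumes "dfa Q \<delta> q0 F"
    and "dfa_lang \<delta> q0 F = (L_UNIQ :: 'a list set)"
  shows "card Q \<ge> 2 ^ (card (UNIV :: 'a set) - 1)"
proof -
  obtain d :: 'a where True by blast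
  define U where "U = UNIV - {d}"
  define lst where "lst S = (SOME xs. distinct xs \<and> set xs = S)" for S :: "'a set"
  have lst: "distinct (lst S) \<and> set (lst S) = S" for S :: "'a set"
    unfolding lst_def by (rule someI_ex) (use finite_distinct_list[of S] in auto)
  define st where "st S = fold (\<lambda>a q. \<delta> q a) (lst S) q0" for S
  have fQ: "finite Q" "q0 \<in> Q" using assms(1) by (auto simp: dfa_def)
  have key: "st S \<noteq> st T" if "S \<subseteq> U" "T \<subseteq> U" "c \<in> S" "c \<notin> T" for S T c
  proof
    assume e: "st S = st T"
    have cd: "c \<noteq> d" "d \<notin> S" "d \<notin> T" using that by (auto simp: U_def)
    have m: "\<And>x. x \<in> L_UNIQ \<longleftrightarrow> fold (\<lambda>a q. \<delta> q a) x q0 \<in> F"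
      using assms(2) unfolding dfa_lang_def by blast
    have n1: "lst S @ [c,d,c] \<notin> L_UNIQ"
      by (rule nonuniq_word) (use lst[of S] that cd in auto)
    have n2: "lst T @ [c,d,c] \<in> L_UNIQ"
      by (rule uniq_word) (use lst[of T] that cd in auto)
    have fe: "fold (\<lambda>a q. \<delta> q a) (lst S @ [c,d,c]) q0 = fold (\<lambda>a q. \<delta> q a) (lst T @ [c,d,c]) q0"
      using e by (simp add: st_def)
    show False using m[of "lst S @ [c,d,c]"] m[of "lst T @ [c,d,c]"] n1 n2 fe by argo
  qed
  have inj: "inj_on st (Pow U)"
  proof (rule inj_onI)
    fix S T assume "S \<in> Pow U" "T \<in> Pow U" "st S = st T"
    hence su: "S \<subseteq> U" "T \<subseteq> U" "st S = st T" by auto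
    show "S = T"
    proof (rule ccontr)
      assume "S \<noteq> T"
      then obtain c where "(c \<in> S \<and> c \<notin> T) \<or> (c \<in> T \<and> c \<notin> S)" by blast
      thus False using key[OF su(1,2)] key[OF su(2,1)] su(3) by metis
    qed
  qed
  have sub: "st ` Pow U \<subseteq> Q" using fold_in[OF assms(1) fQ(2)] by (auto simp: st_def)
  have "card (Pow U) \<le> card Q" using card_inj_on_le[OF inj sub fQ(1)] .
  moreover have "card (Pow U) = 2 ^ (card (UNIV :: 'a set) - 1)"
    by (simp add: card_Pow U_def card_Diff_singleton)
  ultimately show ?thesis by simp
qed

end
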